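(* Let $\Gamma,\Gamma'$ be type environments, $H$ a heap and $R$ a register file with $\Gamma\le\Gamma'$ and $\mathrm{Cons}(H,R,\Gamma)$. Then: (1) for every $x\in dom(\Gamma')$ and every $a\in dom(H)$, $\mathrm{own}(H,R(x),\Gamma(x))(a)\ge\mathrm{own}(H,R(x),\Gamma'(x))(a)$; (2) for every $a\in dom(H)$, $\mathrm{Own}(H,R,\Gamma')(a)\le 1$; (3) for all types $\tau,\tau'$ and values $v$, if $\Gamma\vdash\tau\le\tau'$ and $\mathrm{SATv}(H,R,v,\tau)$ then $\mathrm{SATv}(H,R,v,\tau')$; (4) $\mathrm{SAT}(H,R,\Gamma')$; (5) $\mathrm{Cons}(H,R,\Gamma')$.
   Context: Refinement formulas are first-order formulas over integer program variables, integer literals, a value variable $\nu$, atomic predicates of a fixed theory and context-prefix predicates; $\models\psi$ means $\psi$ is valid. Types $\tau ::= \{\nu:\mathtt{int}\mid\varphi\}\mid\tau\ \mathtt{ref}^r$, $r\in[0,1]$ rational. Values: integers or addresses. Heap $H$: finite partial map addresses $\to$ values; register file $R$: finite partial map variables $\to$ values; type environment $\Gamma$: finite map variables $\to$ types. $[R]\varphi$: $[\emptyset]\varphi=\varphi$, $[R\{x\mapsto n\}]\varphi=[R][n/x]\varphi$ ($n$ integer), $[R\{x\mapsto a\}]\varphi=[R]\varphi$ ($a$ address). $[\![\Gamma]\!]$: conjunction of $[x/\nu]\varphi$ over $x$ with $\Gamma(x)=\{\nu:\mathtt{int}\mid\varphi\}$. Subtyping: $\Gamma\vdash\{\nu:\mathtt{int}\mid\varphi_1\}\le\{\nu:\mathtt{int}\mid\varphi_2\}$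 iff $\models[\![\Gamma]\!]\wedge\varphi_1\Rightarrow\varphi_2$; $\Gamma\vdash\tau_1\ \mathtt{ref}^{r_1}\le\tau_2\ \mathtt{ref}^{r_2}$ iff $r_1\ge r_2$ and $\Gamma\vdash\tau_1\le\tau_2$; $\Gamma\le\Gamma'$ iff for each $x\in dom(\Gamma')$, $x\in dom(\Gamma)$ and $\Gamma\vdash\Gamma(x)\le\Gamma'(x)$. $\mathrm{SATv}(H,R,v,\tau)$: for $\tau=\{\nu:\mathtt{int}\mid\varphi\}$, $v\in\mathbb Z$ and $\models[R][v/\nu]\varphi$; for $\tau=\tau'\ \mathtt{ref}^r$, $v=a\in dom(H)$ and $\mathrm{SATv}(H,R,H(a),\tau')$. $\mathrm{SAT}(H,R,\Gamma)$ iff every $x\in dom(\Gamma)$ is in $dom(R)$ and $\mathrm{SATv}(H,R,R(x),\Gamma(x))$. Ownership maps are functions from addresses to nonnegative rationals, added pointwise; $\{a\mapsto r\}$ maps $a$ to $r$ and all else to 0; $\emptyset$ is the zero map. $\mathrm{own}(H,v,\tau)=\{a\mapsto r\}+\mathrm{own}(H,H(a),\tau')$ if $v=a\in dom(H)$ and $\tau=\tau'\ \mathtt{ref}^r$, and $\emptyset$ otherwise. $\mathrm{Own}(H,R,\Gamma)=\sum_{x\in dom(\Gamma)}\mathrm{own}(H,R(x),\Gamma(x))$. $\mathrm{Cons}(H,R,\Gamma)$ iff $\mathrm{SAT}(H,R,\Gamma)$ and $\mathrm{Own}(H,R,\Gamma)(a)\le 1$ for all $a\in dom(H)$. *)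

theory Defs
  imports Main "HOL.Rat"
begin

datatype 'x fvar = Nu | PVar 'x

(* Refinement formulas, shallowly embedded: a formula is identified with its
   truth value under an assignment of integers to its variables (the atomic
   predicates of the fixed theory and context-prefix predicates are interpreted
   by their fixed meaning). *)
type_synonym 'x formula = "('x fvar \<Rightarrow> int) \<Rightarrow> bool"

definition valid :: "'x formula \<Rightarrow> bool" where
  "valid \<phi> \<longleftrightarrow> (\<forall>\<sigma>. \<phi> \<sigma>)"

definition subst :: "int \<Rightarrow> 'x fvar \<Rightarrow> 'x formula \<Rightarrow> 'x formula" where
  "subst n v \<phi> = (\<lambda>\<sigma>. \<phi> (\<sigma>(v := n)))"

definition rename :: "'x fvar \<Rightarrow> 'x fvar \<Rightarrow> 'x formula \<Rightarrow> 'x formula" where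
  "rename y v \<phi> = (\<lambda>\<sigma>. \<phi> (\<sigma>(v := \<sigma> y)))"

datatype 'x ty = TInt "'x formula" | TRef "'x ty" rat

datatype 'a val = IntV int | Addr 'a

type_synonym 'a heap = "'a \<rightharpoonup> 'a val"
type_synonym ('x,'a) regfile = "'x \<rightharpoonup> 'a val"
type_synonym 'x tyenv = "'x \<rightharpoonup> 'x ty"

primrec wf_ty :: "'x ty \<Rightarrow> bool" where
  "wf_ty (TInt \<phi>) = True"
| "wf_ty (TRef t r) = (0 \<le> r \<and> r \<le> 1 \<and> wf_ty t)"

definition wf_env :: "'x tyenv \<Rightarrow> bool" where
  "wf_env \<Gamma> \<longleftrightarrow> finite (dom \<Gamma>) \<and> (\<forall>x t. \<Gamma> x = Some t \<longrightarrow> wf_ty t)"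

definition subst_reg :: "('x,'a) regfile \<Rightarrow> 'x formula \<Rightarrow> 'x formula" where
  "subst_reg R \<phi> = (\<lambda>\<sigma>. \<phi> (\<lambda>y. case y of
        Nu \<Rightarrow> \<sigma> Nu
      | PVar x \<Rightarrow> (case R x of Some (IntV n) \<Rightarrow> n | _ \<Rightarrow> \<sigma> y)))"

definition env_formula :: "'x tyenv \<Rightarrow> 'x formula" where
  "env_formula \<Gamma> = (\<lambda>\<sigma>. \<forall>x \<phi>. \<Gamma> x = Some (TInt \<phi>) \<longrightarrow> rename (PVar x) Nu \<phi> \<sigma>)"

fun subty :: "'x tyenv \<Rightarrow> 'x ty \<Rightarrow> 'x ty \<Rightarrow> bool" where
  "subty \<Gamma> (TInt \<phi>1) (TInt \<phi>2) = valid (\<lambda>\<sigma>. env_formula \<Gamma> \<sigma> \<and> \<phi>1 \<sigma> \<longrightarrow> \<phi>2 \<sigma>)"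
| "subty \<Gamma> (TRef t1 r1) (TRef t2 r2) = (r1 \<ge> r2 \<and> subty \<Gamma> t1 t2)"
| "subty \<Gamma> _ _ = False"

definition env_le :: "'x tyenv \<Rightarrow> 'x tyenv \<Rightarrow> bool" where
  "env_le \<Gamma> \<Gamma>' \<longleftrightarrow> (\<forall>x \<in> dom \<Gamma>'. x \<in> dom \<Gamma> \<and> subty \<Gamma> (the (\<Gamma> x)) (the (\<Gamma>' x)))"

primrec SATv :: "'a heap \<Rightarrow> ('x,'a) regfile \<Rightarrow> 'a val \<Rightarrow> 'x ty \<Rightarrow> bool" where
  "SATv H R v (TInt \<phi>) =
     (\<exists>n. v = IntV n \<and> valid (subst_reg R (subst n Nu \<phi>)))"
| "SATv H R v (TRef t r) =
     (\<exists>a. v = Addr a \<and> a \<in> dom H \<and> SATv H R (the (H a)) t)"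

definition SAT :: "'a heap \<Rightarrow> ('x,'a) regfile \<Rightarrow> 'x tyenv \<Rightarrow> bool" where
  "SAT H R \<Gamma> \<longleftrightarrow> (\<forall>x \<in> dom \<Gamma>. x \<in> dom R \<and> SATv H R (the (R x)) (the (\<Gamma> x)))"

definition single_own :: "'a \<Rightarrow> rat \<Rightarrow> 'a \<Rightarrow> rat" where
  "single_own a r = (\<lambda>b. if b = a then r else 0)"

primrec own :: "'a heap \<Rightarrow> 'a val \<Rightarrow> 'x ty \<Rightarrow> 'a \<Rightarrow> rat" where
  "own H v (TInt \<phi>) = (\<lambda>_. 0)"
| "own H v (TRef t r) =
     (case v of Addr a \<Rightarrow> (case H a of Some w \<Rightarrow> (\<lambda>b. single_own a r b + own H w t b)
                                     | None \<Rightarrow> (\<lambda>_. 0))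
              | IntV _ \<Rightarrow> (\<lambda>_. 0))"

definition Own :: "'a heap \<Rightarrow> ('x,'a) regfile \<Rightarrow> 'x tyenv \<Rightarrow> 'a \<Rightarrow> rat" where
  "Own H R \<Gamma> = (\<lambda>a. \<Sum>x \<in> dom \<Gamma>. own H (the (R x)) (the (\<Gamma> x)) a)"

definition Cons :: "'a heap \<Rightarrow> ('x,'a) regfile \<Rightarrow> 'x tyenv \<Rightarrow> bool" where
  "Cons H R \<Gamma> \<longleftrightarrow> SAT H R \<Gamma> \<and> (\<forall>a \<in> dom H. Own H R \<Gamma> a \<le> 1)"

end

theory Submission
  imports Defs
begin

lemma own_mono:
  "subty \<Gamma> t t' \<Longrightarrow> own H v t' b \<le> own H v t b"
proof (induction t arbitrary: t' v)
  case (TInt x)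
  then show ?case by (cases t') auto
next
  case (TRef t r)
  then obtain t2 r2 where t': "t' = TRef t2 r2" and "r \<ge> r2" and s: "subty \<Gamma> t t2"
    by (cases t') auto
  show ?case
  proof (cases v)
    case (Addr a)
    then show ?thesis using TRef.IH[OF s] \<open>r \<ge> r2\<close> t'
      by (auto simp: single_own_def split: option.splits intro: add_mono)
  qed (simp add: t')
qed

lemma own_nonneg: "wf_ty t \<Longrightarrow> 0 \<le> own H v t b"
proof (induction t arbitrary: v)
  case (TInt x)
  then show ?case by simp
next
  case (TRef t r)
  then show ?case
    by (auto simp: single_own_def split: option.splits val.splits)
qed

lemma sat_sub:
  assumes SAT: "SAT H R \<Gamma>"
  shows "subty \<Gamma> t t' \<Longrightarrow> SATv H R v t \<Longrightarrow> SATv H R v t'"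
proof (induction t arbitrary: t' v)
  case (TInt \<phi>1)
  then obtain \<phi>2 where t': "t' = TInt \<phi>2" by (cases t') auto
  from TInt.prems t' have vl: "valid (\<lambda>\<sigma>. env_formula \<Gamma> \<sigma> \<and> \<phi>1 \<sigma> \<longrightarrow> \<phi>2 \<sigma>)" by simp
  from TInt.prems obtain n where v: "v = IntV n" and h: "valid (subst_reg R (subst n Nu \<phi>1))"
    by auto
  have "valid (subst_reg R (subst n Nu \<phi>2))"
    unfolding valid_def subst_reg_def subst_def
  proof
    fix \<sigma>
    define \<sigma>' where "\<sigma>' = (\<lambda>y. case y of Nu \<Rightarrow> \<sigma> Nu
        | PVar x \<Rightarrow> (case R x of Some (IntV n) \<Rightarrow> n | _ \<Rightarrow> \<sigma> y))"
    have p1: "\<phi>1 (\<sigma>'(Nu := n))" using h unfolding valid_def subst_reg_def subst_def \<sigma>'_def by blast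
    have ef: "env_formula \<Gamma> (\<sigma>'(Nu := n))"
      unfolding env_formula_def rename_def
    proof (intro allI impI)
      fix x \<phi> assume gx: "\<Gamma> x = Some (TInt \<phi>)"
      have xd: "x \<in> dom \<Gamma>" using gx by blast
      with SAT have "x \<in> dom R" and "SATv H R (the (R x)) (the (\<Gamma> x))"
        unfolding SAT_def by blast+
      with gx have "x \<in> dom R" and "SATv H R (the (R x)) (TInt \<phi>)" by simp_all
      then obtain m where rx: "R x = Some (IntV m)" and hm: "valid (subst_reg R (subst m Nu \<phi>))"
        by auto
      have "\<phi> (\<sigma>'(Nu := m))" using hm unfolding valid_def subst_reg_def subst_def \<sigma>'_def by blast
      moreover have "(\<sigma>'(Nu := n))(Nu := (\<sigma>'(Nu := n)) (PVar x)) = \<sigma>'(Nu := m)"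
        using rx by (simp add: \<sigma>'_def)
      ultimately show "\<phi> ((\<sigma>'(Nu := n))(Nu := (\<sigma>'(Nu := n)) (PVar x)))" by simp
    qed
    have "\<phi>2 (\<sigma>'(Nu := n))" using vl ef p1 unfolding valid_def by blast
    then show "\<phi>2 ((\<lambda>y. case y of Nu \<Rightarrow> \<sigma> Nu
        | PVar x \<Rightarrow> (case R x of Some (IntV n) \<Rightarrow> n | _ \<Rightarrow> \<sigma> y))(Nu := n))"
      unfolding \<sigma>'_def .
  qed
  then show ?case using v t' by simp
next
  case (TRef t r)
  then obtain t2 r2 where t': "t' = TRef t2 r2" and s: "subty \<Gamma> t t2"
    by (cases t') auto
  then show ?case using TRef by auto
qed

theorem lemma12:
  fixes \<Gamma> \<Gamma>' :: "'x tyenv" and H :: "'a heap" and R :: "('x,'a) regfile"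
  assumes "wf_env \<Gamma>" and "wf_env \<Gamma>'"
    and "finite (dom H)" and "finite (dom R)"
    and "env_le \<Gamma> \<Gamma>'" and "Cons H R \<Gamma>"
  shows "(\<forall>x \<in> dom \<Gamma>'. \<forall>a \<in> dom H.
            own H (the (R x)) (the (\<Gamma> x)) a \<ge> own H (the (R x)) (the (\<Gamma>' x)) a)
       \<and> (\<forall>a \<in> dom H. Own H R \<Gamma>' a \<le> 1)
       \<and> (\<forall>\<tau> \<tau>' v. wf_ty \<tau> \<longrightarrow> wf_ty \<tau>' \<longrightarrow> subty \<Gamma> \<tau> \<tau>' \<longrightarrow> SATv H R v \<tau> \<longrightarrow> SATv H R v \<tau>')
       \<and> SAT H R \<Gamma>'
       \<and> Cons H R \<Gamma>'"
proof -
  have SAT: "SAT H R \<Gamma>" using assms(6) by (simp add: Cons_def)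
  have P1: "\<forall>x \<in> dom \<Gamma>'. \<forall>a.
            own H (the (R x)) (the (\<Gamma> x)) a \<ge> own H (the (R x)) (the (\<Gamma>' x)) a"
    using assms(5) own_mono unfolding env_le_def by metis
  have sub: "dom \<Gamma>' \<subseteq> dom \<Gamma>" using assms(5) unfolding env_le_def by blast
  have fin: "finite (dom \<Gamma>)" using assms(1) by (simp add: wf_env_def)
  have P2: "\<forall>a \<in> dom H. Own H R \<Gamma>' a \<le> 1"
  proof
    fix a assume a: "a \<in> dom H"
    have "Own H R \<Gamma>' a \<le> (\<Sum>x \<in> dom \<Gamma>'. own H (the (R x)) (the (\<Gamma> x)) a)"
      unfolding Own_def using P1 by (intro sum_mono) auto
    also have "\<dots> \<le> (\<Sum>x \<in> dom \<Gamma>. own H (the (R x)) (the (\<Gamma> x)) a)"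
    proof (rule sum_mono2[OF fin sub])
      fix x assume "x \<in> dom \<Gamma> - dom \<Gamma>'"
      then obtain t where "\<Gamma> x = Some t" by auto
      with assms(1) have "wf_ty t" by (simp add: wf_env_def)
      then show "0 \<le> own H (the (R x)) (the (\<Gamma> x)) a" using own_nonneg \<open>\<Gamma> x = Some t\<close> by simp
    qed
    also have "\<dots> \<le> 1" using assms(6) a unfolding Cons_def Own_def by blast
    finally show "Own H R \<Gamma>' a \<le> 1" .
  qed
  have P3: "\<forall>\<tau> \<tau>' v. wf_ty \<tau> \<longrightarrow> wf_ty \<tau>' \<longrightarrow> subty \<Gamma> \<tau> \<tau>' \<longrightarrow> SATv H R v \<tau> \<longrightarrow> SATv H R v \<tau>'"
    using sat_sub[OF SAT] by blast
  have P4: "SAT H R \<Gamma>'"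
    unfolding SAT_def
  proof
    fix x assume x: "x \<in> dom \<Gamma>'"
    then have "x \<in> dom \<Gamma>" using sub by blast
    with SAT have "x \<in> dom R" "SATv H R (the (R x)) (the (\<Gamma> x))" unfolding SAT_def by auto
    moreover have "subty \<Gamma> (the (\<Gamma> x)) (the (\<Gamma>' x))" using assms(5) x unfolding env_le_def by blast
    ultimately show "x \<in> dom R \<and> SATv H R (the (R x)) (the (\<Gamma>' x))"
      using sat_sub[OF SAT] by blast
  qed
  show ?thesis using P1 P2 P3 P4 by (simp add: Cons_def)
qed

end
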